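(* The function $f(t) = t^{-1}(1-e^t)\log(1-e^{-t})$ is a strictly decreasing bijection from $\mathbb{R}^+ = (0,\infty)$ onto $\mathbb{R}^+$. *)

theory Defs
  imports "HOL-Analysis.Analysis"
begin

definition fact_f :: "real \<Rightarrow> real" where
  "fact_f t = (1 / t) * (1 - exp t) * ln (1 - exp (- t))"

end

theory Submission imports Defs "HOL-Real_Asymp.Real_Asymp" begin

definition LL :: "real \<Rightarrow> real" where "LL t = ln (1 - exp (-t))"

definition hh :: "real \<Rightarrow> real" where
  "hh t = t*(-exp t * LL t - 1) - (1 - exp t) * LL t"

lemma fact_f_LL: "fact_f = (\<lambda>t. (1 / t) * (1 - exp t) * LL t)"
  by (auto simp: fact_f_def LL_def)

lemma aux1: "(t::real) > 0 \<Longrightarrow> 0 < 1 - exp(-t) \<and> 1 - exp(-t) < 1"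
  by auto

lemma derL: assumes "(t::real) > 0"
  shows "(LL has_real_derivative (1/(exp t - 1))) (at t)"
proof -
  have "exp t > 1" using assms by simp
  thus ?thesis using aux1[OF assms] unfolding LL_def[abs_def]
    by (auto intro!: derivative_eq_intros simp: exp_minus field_simps)
qed

lemma der_f: assumes "(t::real) > 0" shows "(fact_f has_real_derivative hh t / t^2) (at t)"
proof -
  have "exp t > 1" using assms by simp
  hence ne: "exp t - 1 \<noteq> 0" "exp t \<noteq> 1" by auto
  show ?thesis unfolding fact_f_LL
    using assms ne
    by (auto intro!: derivative_eq_intros derL simp: hh_def field_simps power2_eq_square)
qed

lemma hh_der: assumes "(t::real) > 0"
  shows "(hh has_real_derivative t*(-exp t * LL t - exp t/(exp t - 1))) (at t)"
proof -
  have "exp t > 1" using assms by simp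
  hence ne: "exp t - 1 \<noteq> 0" "exp t \<noteq> 1" by auto
  have q: "(1 - exp t) / (exp t - 1) = -1" using ne by (simp add: field_simps)
  have q2: "exp t / (exp t - 1) + (1 - exp t) / (exp t - 1) = 1 / (exp t - 1)"
    by (simp add: add_divide_distrib[symmetric])
  show ?thesis
    unfolding hh_def[abs_def]
    using assms q q2 by (auto intro!: derivative_eq_intros derL simp: algebra_simps)
qed

lemma key_ineq: assumes "(t::real) > 0"
  shows "-exp t * LL t - exp t/(exp t - 1) < 0"
proof -
  define y where "y = 1 - exp (-t)"
  have y: "0 < y" "y < 1" using aux1[OF assms] y_def by auto
  have "ln (1/y) - ln 1 < (1/y - 1) / 1"
    using y by (intro ln_diff_less) auto
  hence "- ln y < 1/y - 1" using y by (simp add: ln_div)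
  also have "1/y - 1 = 1/(exp t - 1)"
    using y unfolding y_def by (simp add: exp_minus field_simps)
  finally have "- LL t < 1/(exp t - 1)" unfolding LL_def y_def .
  hence "exp t * (- LL t) < exp t * (1/(exp t - 1))" by (rule mult_strict_left_mono) simp
  thus ?thesis by simp
qed

lemma hh_der_neg: "(t::real) > 0 \<Longrightarrow> \<exists>d. (hh has_real_derivative d) (at t) \<and> d < 0"
  using hh_der key_ineq mult_pos_neg by blast

lemma hh_decr: "0 < s \<Longrightarrow> s < (t::real) \<Longrightarrow> hh t < hh s"
  by (rule DERIV_neg_imp_decreasing) (auto intro: hh_der_neg)

lemma hh_lim: "(hh \<longlongrightarrow> 0) (at_right 0)"
proof -
  have 1: "((\<lambda>t::real. t* exp t * ln (1 - exp (-t))) \<longlongrightarrow> 0) (at_right 0)"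
    by real_asymp
  have 2: "((\<lambda>t::real. (exp t - 1) * ln (1 - exp (-t))) \<longlongrightarrow> 0) (at_right 0)"
    by real_asymp
  have 3: "((\<lambda>t::real. t) \<longlongrightarrow> 0) (at_right 0)"
    by real_asymp
  have "((\<lambda>t::real. - ((t* exp t * ln (1 - exp (-t))) + t - (exp t - 1) * ln (1 - exp (-t)))) \<longlongrightarrow> - (0 + 0 - 0)) (at_right 0)"
    by (intro tendsto_intros 1 2 3)
  moreover have "hh = (\<lambda>t::real. - ((t* exp t * ln (1 - exp (-t))) + t - (exp t - 1) * ln (1 - exp (-t))))"
    by (auto simp: hh_def LL_def algebra_simps)
  ultimately show ?thesis by simp
qed

lemma hh_neg: assumes "(t::real) > 0" shows "hh t < 0"
proof -
  have "hh (t/2) \<le> 0"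
  proof (rule tendsto_lowerbound[OF hh_lim])
    show "\<forall>\<^sub>F x in at_right 0. hh (t / 2) \<le> hh x"
      unfolding eventually_at_right_field
      using assms by (intro exI[of _ "t/2"]) (auto intro!: less_imp_le[OF hh_decr])
  qed simp
  moreover have "hh t < hh (t/2)" using assms hh_decr by simp
  ultimately show ?thesis by simp
qed

lemma f_decr: assumes "0 < s" "s < (t::real)" shows "fact_f t < fact_f s"
proof (rule DERIV_neg_imp_decreasing[OF assms(2)])
  fix x assume "s \<le> x" "x \<le> t"
  hence "x > 0" using assms by simp
  thus "\<exists>y. (fact_f has_real_derivative y) (at x) \<and> y < 0"
    using der_f hh_neg by (intro exI[of _ "hh x / x^2"]) (auto simp: divide_neg_pos)
qed

lemma f_pos: assumes "(t::real) > 0" shows "fact_f t > 0"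
proof -
  have "ln (1 - exp (-t)) < 0" using aux1[OF assms] by simp
  moreover have "1 - exp t < 0" using assms by simp
  ultimately show ?thesis using assms unfolding fact_f_def
    by (simp add: mult_neg_neg)
qed

lemma f_top: "filterlim fact_f at_top (at_right 0)"
proof -
  have "filterlim (\<lambda>t::real. (1 / t) * (1 - exp t) * ln (1 - exp (- t))) at_top (at_right 0)"
    by real_asymp
  thus ?thesis by (simp add: fact_f_def[abs_def])
qed

lemma f_zero: "(fact_f \<longlongrightarrow> 0) at_top"
proof -
  have "((\<lambda>t::real. (1 / t) * (1 - exp t) * ln (1 - exp (- t))) \<longlongrightarrow> 0) at_top"
    by real_asymp
  thus ?thesis by (simp add: fact_f_def[abs_def])
qed

theorem fact2p3:
  shows "(\<forall>s\<in>{0<..}. \<forall>t\<in>{0<..}. s < t \<longrightarrow> fact_f t < fact_f s)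
         \<and> bij_betw fact_f {0<..} {0<..}"
proof (intro conjI)
  show "\<forall>s\<in>{0<..}. \<forall>t\<in>{0<..}. s < t \<longrightarrow> fact_f t < fact_f s"
    using f_decr by auto
  have inj: "inj_on fact_f {0<..}"
  proof (rule inj_onI)
    fix x y :: real assume "x \<in> {0<..}" "y \<in> {0<..}" "fact_f x = fact_f y"
    thus "x = y" using f_decr by (metis greaterThan_iff less_irrefl linorder_neqE_linordered_idom)
  qed
  have "fact_f ` {0<..} = {0<..}"
  proof
    show "fact_f ` {0<..} \<subseteq> {0<..}" using f_pos by auto
    show "{0<..} \<subseteq> fact_f ` {0<..}"
    proof
      fix y :: real assume "y \<in> {0<..}"
      hence y: "y > 0" by simp
      have "\<forall>\<^sub>F t in at_right 0. fact_f t > y"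
        using f_top filterlim_at_top_dense by blast
      then obtain b where b: "b > 0" "\<And>t. t > 0 \<Longrightarrow> t < b \<Longrightarrow> fact_f t > y"
        unfolding eventually_at_right_field by auto
      have "\<forall>\<^sub>F t in at_top. fact_f t < y"
        using f_zero y order_tendstoD(2) by blast
      then obtain N where N: "\<And>t. t \<ge> N \<Longrightarrow> fact_f t < y"
        unfolding eventually_at_top_linorder by auto
      define t1 where "t1 = b/2"
      define t2 where "t2 = max N b"
      have t1: "t1 > 0" "fact_f t1 > y" using b t1_def by auto
      have t2: "t1 \<le> t2" "fact_f t2 < y" using N t1_def t2_def b by auto
      have "\<forall>x. t1 \<le> x \<and> x \<le> t2 \<longrightarrow> isCont fact_f x"
        using t1 der_f by (meson DERIV_isCont less_le_trans)
      then obtain x where "t1 \<le> x" "x \<le> t2" "fact_f x = y"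
        using IVT2[of fact_f t2 y t1] t1 t2 by auto
      thus "y \<in> fact_f ` {0<..}" using t1 by force
    qed
  qed
  with inj show "bij_betw fact_f {0<..} {0<..}" unfolding bij_betw_def by simp
qed

end
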